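(* Let $I$ be a finite set and let $\{g_i: i\in I\}$ be an independent set of elements of a free group $F_n$, i.e. the $g_i$ are pairwise distinct and form a free basis of the subgroup $G=\langle g_i: i\in I\rangle$. For each $i\in I$ let $G_i=\langle g_j: j\in I\setminus\{i\}\rangle$. Then the coset incidence system $\Gamma(G;(G_i)_{i\in I})$ is flag-transitive, i.e. $G$ acting by right multiplication is transitive on the set of flags of type $J$ for every $J\subseteq I$.
   Context: An incidence system is a quadruple $(X,*,t,I)$ with $X$ a set, $I$ a finite type set, $t:X\to I$ surjective, and $*$ a symmetric relation with no two elements of the same type incident. A flag is a set of pairwise incident elements; its type is the set of types of its elements. Coset incidence system: given a group $G$ and subgroups $(G_i)_{i\in I}$, $\Gamma(G;(G_i)_{i\in I})$ has as elements all right cosets $G_ig$ ($g\in G$, $i\in I$), with $t(G_ig)=i$, and $G_ig_1 * G_jg_2$ iff $G_ig_1\cap G_jg_2\neq\emptyset$ (for cosets of different types). $G$ acts on it by right multiplication, preserving types and incidence. *)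

theory Defs
  imports "HOL-Algebra.Algebra"
begin

text \<open>Words over an index set: a letter (True,i) stands for x i, (False,i) for its inverse.\<close>
fun word_eval :: "('a,'b) monoid_scheme \<Rightarrow> ('i \<Rightarrow> 'a) \<Rightarrow> (bool \<times> 'i) list \<Rightarrow> 'a" where
  "word_eval G x [] = \<one>\<^bsub>G\<^esub>"
| "word_eval G x ((b,i)#w) =
     (if b then x i else inv\<^bsub>G\<^esub> (x i)) \<otimes>\<^bsub>G\<^esub> word_eval G x w"

fun reduced_word :: "(bool \<times> 'i) list \<Rightarrow> bool" where
  "reduced_word ((b,i)#(c,j)#w) = ((\<not> (i = j \<and> b \<noteq> c)) \<and> reduced_word ((c,j)#w))"
| "reduced_word _ = True"

definition independent_family :: "('a,'b) monoid_scheme \<Rightarrow> ('i \<Rightarrow> 'a) \<Rightarrow> 'i set \<Rightarrow> bool" where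
  "independent_family G x I \<longleftrightarrow> x ` I \<subseteq> carrier G \<and>
     (\<forall>w. set (map snd w) \<subseteq> I \<longrightarrow> reduced_word w \<longrightarrow> w \<noteq> [] \<longrightarrow> word_eval G x w \<noteq> \<one>\<^bsub>G\<^esub>)"

text \<open>F is (isomorphic to) the free group F_n: it has a free basis of n distinct elements.\<close>
definition free_group_of_rank :: "('a,'b) monoid_scheme \<Rightarrow> nat \<Rightarrow> bool" where
  "free_group_of_rank F n \<longleftrightarrow> group F \<and>
     (\<exists>x. independent_family F x {..<n} \<and> inj_on x {..<n} \<and> generate F (x ` {..<n}) = carrier F)"

text \<open>Coset incidence system Gamma(G; (H i)_{i in I}); an element is a pair (type, right coset).\<close>
definition coset_elements :: "('a,'b) monoid_scheme \<Rightarrow> ('i \<Rightarrow> 'a set) \<Rightarrow> 'i set \<Rightarrow> ('i \<times> 'a set) set" where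
  "coset_elements G H I = {(i, H i #>\<^bsub>G\<^esub> a) | i a. i \<in> I \<and> a \<in> carrier G}"

definition coset_incident :: "('i \<times> 'a set) \<Rightarrow> ('i \<times> 'a set) \<Rightarrow> bool" where
  "coset_incident x y \<longleftrightarrow> fst x \<noteq> fst y \<and> snd x \<inter> snd y \<noteq> {}"

definition coset_flag :: "('a,'b) monoid_scheme \<Rightarrow> ('i \<Rightarrow> 'a set) \<Rightarrow> 'i set \<Rightarrow> ('i \<times> 'a set) set \<Rightarrow> bool" where
  "coset_flag G H I Fl \<longleftrightarrow> Fl \<subseteq> coset_elements G H I \<and>
     (\<forall>x\<in>Fl. \<forall>y\<in>Fl. x \<noteq> y \<longrightarrow> coset_incident x y)"

definition flag_type :: "('i \<times> 'a set) set \<Rightarrow> 'i set" where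
  "flag_type Fl = fst ` Fl"

definition right_act :: "('a,'b) monoid_scheme \<Rightarrow> 'a \<Rightarrow> ('i \<times> 'a set) \<Rightarrow> ('i \<times> 'a set)" where
  "right_act G a x = (fst x, snd x #>\<^bsub>G\<^esub> a)"

definition flag_transitive :: "('a,'b) monoid_scheme \<Rightarrow> ('i \<Rightarrow> 'a set) \<Rightarrow> 'i set \<Rightarrow> bool" where
  "flag_transitive G H I \<longleftrightarrow>
     (\<forall>J \<subseteq> I. \<forall>F1 F2. coset_flag G H I F1 \<and> flag_type F1 = J \<and>
                     coset_flag G H I F2 \<and> flag_type F2 = J \<longrightarrow>
                     (\<exists>a \<in> carrier G. right_act G a ` F1 = F2))"

end

theory Submission
  imports Defs
begin


fun rcons :: "bool \<times> 'i \<Rightarrow> (bool \<times> 'i) list \<Rightarrow> (bool \<times> 'i) list" where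
  "rcons (b,i) ((c,j)#w) = (if i = j \<and> b \<noteq> c then w else (b,i)#(c,j)#w)"
| "rcons x [] = [x]"

definition invw :: "(bool \<times> 'i) list \<Rightarrow> (bool \<times> 'i) list" where
  "invw w = rev (map (\<lambda>(b,i). (\<not> b, i)) w)"

lemma reduced_tl: "reduced_word (x#w) \<Longrightarrow> reduced_word w"
  by (cases x; cases w) auto

lemma reduced_rcons: "reduced_word w \<Longrightarrow> reduced_word (rcons x w)"
  apply (cases x; cases w)
   apply simp
  subgoal for b i y w' by (cases y) (auto dest: reduced_tl)
  done

lemma letters_rcons: "set (map snd (rcons x w)) \<subseteq> insert (snd x) (set (map snd w))"
  apply (cases x; cases w)
   apply simp
  subgoal for b i y w' by (cases y) auto
  done

lemma reduced_append:
  "reduced_word (xs @ ys) \<longleftrightarrow> reduced_word xs \<and> reduced_word ys \<and>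
     (xs \<noteq> [] \<longrightarrow> ys \<noteq> [] \<longrightarrow> \<not> (snd (last xs) = snd (hd ys) \<and> fst (last xs) \<noteq> fst (hd ys)))"
proof (induction xs)
  case Nil then show ?case by simp
next
  case (Cons x xs)
  show ?case
  proof (cases xs)
    case Nil
    then show ?thesis by (cases x; cases ys) auto
  next
    case (Cons y zs)
    then show ?thesis using Cons.IH by (cases x; cases y) auto
  qed
qed

lemma reduced_invw: "reduced_word w \<Longrightarrow> reduced_word (invw w)"
proof (induction w)
  case Nil then show ?case by (simp add: invw_def)
next
  case (Cons x w)
  have r: "reduced_word w" using Cons.prems reduced_tl by blast
  have e: "invw (x#w) = invw w @ [(\<not> fst x, snd x)]" by (cases x) (simp add: invw_def)
  show ?case
  proof (cases w)
    case Nil then show ?thesis using e by (simp add: invw_def)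
  next
    case (Cons y zs)
    have "last (invw w) = (\<not> fst y, snd y)" using Cons by (cases y) (simp add: invw_def)
    moreover have "invw w \<noteq> []" using Cons by (simp add: invw_def)
    moreover have "\<not> (snd x = snd y \<and> fst x \<noteq> fst y)" using Cons.prems Cons by (cases x; cases y) auto
    ultimately show ?thesis unfolding e reduced_append using Cons.IH r by auto
  qed
qed

lemma letters_invw: "set (map snd (invw w)) = set (map snd w)"
  by (auto simp: invw_def image_iff split: prod.splits) (metis snd_conv)+

locale fwords = group G for G (structure) +
  fixes g :: "'i \<Rightarrow> 'a" and I :: "'i set"
  assumes gI: "g ` I \<subseteq> carrier G"
begin

lemma eval_carrier: "set (map snd w) \<subseteq> I \<Longrightarrow> word_eval G g w \<in> carrier G"
  by (induction w) (use gI in auto)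

lemma eval_append: "set (map snd xs) \<subseteq> I \<Longrightarrow> set (map snd ys) \<subseteq> I \<Longrightarrow>
   word_eval G g (xs @ ys) = word_eval G g xs \<otimes> word_eval G g ys"
  by (induction xs) (use gI eval_carrier in \<open>auto simp: m_assoc\<close>)

lemma eval_rcons: "snd x \<in> I \<Longrightarrow> set (map snd w) \<subseteq> I \<Longrightarrow>
   word_eval G g (rcons x w) = word_eval G g (x # w)"
  apply (cases x; cases w)
   apply simp
  subgoal for b i y w'
    apply (cases y)
    using gI eval_carrier[of w']
    apply (auto simp: m_assoc[symmetric])
    done
  done

definition red :: "(bool \<times> 'i) list \<Rightarrow> (bool \<times> 'i) list" where
  "red w = foldr rcons w []"

lemma red_props: "set (map snd w) \<subseteq> I \<Longrightarrow> reduced_word (red w) \<and>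
   set (map snd (red w)) \<subseteq> set (map snd w) \<and> word_eval G g (red w) = word_eval G g w"
proof (induction w)
  case Nil then show ?case by (simp add: red_def)
next
  case (Cons x w)
  then have IH: "reduced_word (red w)" "set (map snd (red w)) \<subseteq> set (map snd w)"
     "word_eval G g (red w) = word_eval G g w" by auto
  have rr: "red (x#w) = rcons x (red w)" by (simp add: red_def)
  have L: "set (map snd (rcons x (red w))) \<subseteq> set (map snd (x#w))"
    using letters_rcons[of x "red w"] IH(2) by auto
  show ?case unfolding rr
    using reduced_rcons[OF IH(1), of x] L IH Cons.prems
       eval_rcons[of x "red w"] by (cases x) auto
qed

lemma eval_invw: "set (map snd w) \<subseteq> I \<Longrightarrow> word_eval G g (invw w) = inv (word_eval G g w)"
proof (induction w)
  case Nil then show ?case by (simp add: invw_def)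
next
  case (Cons x w)
  have e: "invw (x#w) = invw w @ [(\<not> fst x, snd x)]" by (cases x) (simp add: invw_def)
  have l: "set (map snd (invw w)) \<subseteq> I" unfolding letters_invw using Cons.prems by simp
  have gx: "g (snd x) \<in> carrier G" using Cons.prems gI by auto
  show ?case unfolding e using eval_append[OF l, of "[(\<not> fst x, snd x)]"] Cons gx eval_carrier[of w]
    by (cases x) (auto simp: inv_mult_group)
qed

lemma eval_in_generate: "K \<subseteq> I \<Longrightarrow> set (map snd w) \<subseteq> K \<Longrightarrow> word_eval G g w \<in> generate G (g ` K)"
proof (induction w)
  case Nil then show ?case by (simp add: generate.one)
next
  case (Cons x w)
  have S: "subgroup (generate G (g ` K)) G" using Cons.prems gI by (intro generate_is_subgroup) auto
  have gx: "g (snd x) \<in> generate G (g ` K)" using Cons.prems by (intro generate.incl) auto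
  show ?case using Cons S gx subgroup.m_closed[OF S] subgroup.m_inv_closed[OF S]
    by (cases x) auto
qed

lemma generate_words: assumes "K \<subseteq> I" shows "x \<in> generate G (g ` K) \<Longrightarrow>
   \<exists>w. reduced_word w \<and> set (map snd w) \<subseteq> K \<and> x = word_eval G g w"
proof (induction x rule: generate.induct)
  case one
  then show ?case by (intro exI[of _ "[]"]) auto
next
  case (incl h)
  then obtain i where "i \<in> K" "h = g i" by auto
  then show ?case using gI assms by (intro exI[of _ "[(True,i)]"]) (auto simp: subset_iff)
next
  case (inv h)
  then obtain i where "i \<in> K" "h = g i" by auto
  then show ?case using gI assms by (intro exI[of _ "[(False,i)]"]) (auto simp: subset_iff)
next
  case (eng h1 h2)
  then obtain w1 w2 where w: "reduced_word w1" "set (map snd w1) \<subseteq> K" "h1 = word_eval G g w1"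
    "reduced_word w2" "set (map snd w2) \<subseteq> K" "h2 = word_eval G g w2" by blast
  have l: "set (map snd (w1 @ w2)) \<subseteq> I" using w assms by auto
  have R: "reduced_word (red (w1 @ w2))" "set (map snd (red (w1 @ w2))) \<subseteq> K"
    "word_eval G g (red (w1 @ w2)) = h1 \<otimes> h2"
  proof -
    have a: "set (map snd (red (w1 @ w2))) \<subseteq> set (map snd (w1 @ w2))" using red_props[OF l] by blast
    have b: "set (map snd (w1 @ w2)) \<subseteq> K" using w by simp
    show "reduced_word (red (w1 @ w2))" using red_props[OF l] by blast
    show "set (map snd (red (w1 @ w2))) \<subseteq> K" using a b by blast
    show "word_eval G g (red (w1 @ w2)) = h1 \<otimes> h2"
      using red_props[OF l] w eval_append[of w1 w2] assms by auto
  qed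
  show ?case using R by metis
qed

end


locale fwords_ind = fwords +
  assumes indep: "independent_family G g I"
begin

lemma eval_ne_one: "reduced_word w \<Longrightarrow> set (map snd w) \<subseteq> I \<Longrightarrow> w \<noteq> [] \<Longrightarrow> word_eval G g w \<noteq> \<one>"
  using indep unfolding independent_family_def by blast

lemma last_invw: "last (invw (y#w)) = (\<not> fst y, snd y)"
  by (cases y) (simp add: invw_def)

lemma unique: "reduced_word w1 \<Longrightarrow> reduced_word w2 \<Longrightarrow> set (map snd w1) \<subseteq> I \<Longrightarrow>
   set (map snd w2) \<subseteq> I \<Longrightarrow> word_eval G g w1 = word_eval G g w2 \<Longrightarrow> w1 = w2"
proof (induction w1 arbitrary: w2)
  case Nil
  then show ?case using eval_ne_one[of w2] by auto
next
  case (Cons x w1)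
  show ?case
  proof (cases w2)
    case Nil
    then show ?thesis using eval_ne_one[of "x#w1"] Cons.prems by auto
  next
    case (Cons y w2')
    have lx: "set (map snd [x]) \<subseteq> I" "set (map snd w1) \<subseteq> I" using Cons.prems by auto
    have ly: "set (map snd [y]) \<subseteq> I" "set (map snd w2') \<subseteq> I" using Cons.prems Cons by auto
    show ?thesis
    proof (cases "x = y")
      case True
      have "word_eval G g [x] \<otimes> word_eval G g w1 = word_eval G g [x] \<otimes> word_eval G g w2'"
        using Cons.prems Cons True eval_append[OF lx] eval_append[OF ly] by simp
      then have "word_eval G g w1 = word_eval G g w2'"
        using eval_carrier lx ly by simp
      then have "w1 = w2'" using Cons.IH[of w2'] Cons.prems Cons reduced_tl[of x w1] reduced_tl[of y w2'] by auto
      then show ?thesis using Cons True by simp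
    next
      case False
      let ?z = "invw w2 @ (x#w1)"
      have l2: "set (map snd w2) \<subseteq> I" "set (map snd (x#w1)) \<subseteq> I" using Cons.prems by auto
      have l2': "set (map snd (invw w2)) \<subseteq> I" using l2 letters_invw by metis
      have "word_eval G g ?z = inv (word_eval G g w2) \<otimes> word_eval G g (x#w1)"
        using eval_append[OF l2' l2(2)] eval_invw[OF l2(1)] by simp
      also have "\<dots> = \<one>" using Cons.prems eval_carrier[OF l2(1)] by simp
      finally have e1: "word_eval G g ?z = \<one>" .
      have "reduced_word ?z"
        unfolding reduced_append using reduced_invw[of w2] Cons.prems Cons last_invw[of y w2'] False
        by (cases x; cases y) (auto simp: invw_def)
      moreover have "set (map snd ?z) \<subseteq> I" using l2 l2' by simp
      ultimately show ?thesis using eval_ne_one e1 by blast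
    qed
  qed
qed

end


lemma rcos_upd: "H #>\<^bsub>M\<lparr>carrier := Y\<rparr>\<^esub> a = H #>\<^bsub>M\<^esub> a"
  by (simp add: r_coset_def)

lemma suffix_split: "p @ a = q @ b \<Longrightarrow> length a \<le> length b \<Longrightarrow> \<exists>u. b = u @ a \<and> p = q @ u"
  unfolding append_eq_append_conv2 by auto

context fwords_ind
begin

lemma Hsub: "K \<subseteq> I \<Longrightarrow> subgroup (generate G (g ` K)) G"
  using gI by (intro generate_is_subgroup) auto

lemma canon:
  assumes i: "i \<in> I" and a: "a \<in> generate G (g ` I)"
  shows "\<exists>v. reduced_word v \<and> set (map snd v) \<subseteq> I \<and> (v \<noteq> [] \<longrightarrow> snd (hd v) = i) \<and>
     generate G (g ` (I - {i})) #> a = generate G (g ` (I - {i})) #> word_eval G g v"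
proof -
  obtain w where w: "reduced_word w" "set (map snd w) \<subseteq> I" "a = word_eval G g w"
    using generate_words[of I a] a by auto
  define u where "u = takeWhile (\<lambda>l. snd l \<noteq> i) w"
  define v where "v = dropWhile (\<lambda>l. snd l \<noteq> i) w"
  have wuv: "w = u @ v" by (simp add: u_def v_def)
  have tw: "set u \<subseteq> {l \<in> set w. snd l \<noteq> i}" unfolding u_def by (auto dest: set_takeWhileD)
  have lu: "set (map snd u) \<subseteq> I - {i}" using tw w(2) by fastforce
  have lv: "set (map snd v) \<subseteq> I" using w(2) wuv by (metis le_supE map_append set_append)
  have rv: "reduced_word v" using w(1) unfolding wuv reduced_append by simp
  have hv: "v \<noteq> [] \<longrightarrow> snd (hd v) = i" unfolding v_def using hd_dropWhile[of "\<lambda>l. snd l \<noteq> i" w] by simp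
  have S: "subgroup (generate G (g ` (I - {i}))) G" by (rule Hsub) auto
  have eu: "word_eval G g u \<in> generate G (g ` (I - {i}))" by (rule eval_in_generate[OF _ lu]) auto
  have lu': "set (map snd u) \<subseteq> I" using lu by auto
  have "generate G (g ` (I - {i})) #> a = (generate G (g ` (I - {i})) #> word_eval G g u) #> word_eval G g v"
    using w(3) wuv eval_append[OF lu' lv] coset_mult_assoc[OF subgroup.subset[OF S] eval_carrier[OF lu'] eval_carrier[OF lv]]
    by simp
  also have "\<dots> = generate G (g ` (I - {i})) #> word_eval G g v"
    using coset_join2[OF eval_carrier[OF lu'] S eu] by simp
  finally show ?thesis using rv lv hv by blast
qed

lemma elem:
  assumes i: "i \<in> I" and v: "reduced_word v" "set (map snd v) \<subseteq> I" "v \<noteq> [] \<longrightarrow> snd (hd v) = i"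
    and y: "y \<in> generate G (g ` (I - {i})) #> word_eval G g v"
  shows "\<exists>p. set (map snd p) \<subseteq> I - {i} \<and> reduced_word (p @ v) \<and> y = word_eval G g (p @ v)"
proof -
  obtain h where h: "h \<in> generate G (g ` (I - {i}))" "y = h \<otimes> word_eval G g v"
    using y unfolding r_coset_def by auto
  obtain p where p: "reduced_word p" "set (map snd p) \<subseteq> I - {i}" "h = word_eval G g p"
    using generate_words[of "I - {i}" h] h(1) by auto
  have "snd (last p) \<noteq> i" if "p \<noteq> []"
  proof -
    have "last p \<in> set p" using that by simp
    then have "snd (last p) \<in> set (map snd p)" by simp
    then show ?thesis using p(2) by blast
  qed
  then have "reduced_word (p @ v)" unfolding reduced_append using p v by auto
  moreover have "set (map snd p) \<subseteq> I" using p(2) by blast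
  then have "y = word_eval G g (p @ v)" using eval_append[of p v] p v h by simp
  ultimately show ?thesis using p by blast
qed

lemma flag_common:
  assumes fin: "finite I"
    and Fl: "coset_flag (G\<lparr>carrier := generate G (g ` I)\<rparr>) (\<lambda>i. generate G (g ` (I - {i}))) I Fl"
  shows "\<exists>b \<in> generate G (g ` I). Fl = (\<lambda>i. (i, generate G (g ` (I - {i})) #> b)) ` flag_type Fl"
proof -
  define H where "H i = generate G (g ` (I - {i}))" for i
  have sub: "Fl \<subseteq> {(i, H i #> a) | i a. i \<in> I \<and> a \<in> generate G (g ` I)}"
    using Fl by (simp add: coset_flag_def coset_elements_def rcos_upd H_def)
  have inc: "\<forall>x\<in>Fl. \<forall>y\<in>Fl. x \<noteq> y \<longrightarrow> fst x \<noteq> fst y \<and> snd x \<inter> snd y \<noteq> {}"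
    using Fl by (simp add: coset_flag_def coset_incident_def)
  have "\<forall>x\<in>Fl. \<exists>v. reduced_word v \<and> set (map snd v) \<subseteq> I \<and> (v \<noteq> [] \<longrightarrow> snd (hd v) = fst x) \<and>
      snd x = H (fst x) #> word_eval G g v"
  proof
    fix x assume "x \<in> Fl"
    then obtain i a where "x = (i, H i #> a)" "i \<in> I" "a \<in> generate G (g ` I)" using sub by blast
    then show "\<exists>v. reduced_word v \<and> set (map snd v) \<subseteq> I \<and> (v \<noteq> [] \<longrightarrow> snd (hd v) = fst x) \<and>
      snd x = H (fst x) #> word_eval G g v" using canon[of i a] unfolding H_def by auto
  qed
  then obtain V where V: "\<And>x. x \<in> Fl \<Longrightarrow> reduced_word (V x) \<and> set (map snd (V x)) \<subseteq> I \<and>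
      (V x \<noteq> [] \<longrightarrow> snd (hd (V x)) = fst x) \<and> snd x = H (fst x) #> word_eval G g (V x)"
    by (metis (no_types, lifting) bchoice)
  have fstI: "fst ` Fl \<subseteq> I" using sub by auto
  have injf: "inj_on fst Fl" using inc by (meson inj_onI)
  have finFl: "finite Fl" using finite_imageD[OF finite_subset[OF fstI fin] injf] .
  show ?thesis
  proof (cases "Fl = {}")
    case True
    then show ?thesis by (auto simp: flag_type_def intro: generate.one)
  next
    case False
    define M where "M = Max ((\<lambda>x. length (V x)) ` Fl)"
    have "M \<in> (\<lambda>x. length (V x)) ` Fl" unfolding M_def using finFl False by (intro Max_in) auto
    then obtain m where m: "m \<in> Fl" "M = length (V m)" by blast
    have mx: "length (V x) \<le> length (V m)" if x: "x \<in> Fl" for x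
      using Max_ge[OF finite_imageI[OF finFl] imageI[OF x], of "\<lambda>x. length (V x)"] m(2) unfolding M_def by simp
    define b where "b = word_eval G g (V m)"
    have bG: "b \<in> generate G (g ` I)" unfolding b_def using V[OF m(1)] by (intro eval_in_generate) auto
    have key: "snd x = H (fst x) #> b" if x: "x \<in> Fl" for x
    proof (cases "x = m")
      case True
      then show ?thesis using V[OF m(1)] b_def by simp
    next
      case False
      define i where "i = fst x"
      define k where "k = fst m"
      have iI: "i \<in> I" "k \<in> I" using fstI x m(1) i_def k_def by auto
      obtain y where y: "y \<in> snd x" "y \<in> snd m" using inc x m(1) False by blast
      have Vx: "reduced_word (V x)" "set (map snd (V x)) \<subseteq> I" "V x \<noteq> [] \<longrightarrow> snd (hd (V x)) = i"
        "snd x = H i #> word_eval G g (V x)" using V[OF x] i_def by auto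
      have Vm: "reduced_word (V m)" "set (map snd (V m)) \<subseteq> I" "V m \<noteq> [] \<longrightarrow> snd (hd (V m)) = k"
        "snd m = H k #> word_eval G g (V m)" using V[OF m(1)] k_def by auto
      obtain p where p: "set (map snd p) \<subseteq> I - {i}" "reduced_word (p @ V x)" "y = word_eval G g (p @ V x)"
        using elem[OF iI(1) Vx(1-3)] y(1) Vx(4) unfolding H_def by auto
      obtain q where q: "set (map snd q) \<subseteq> I - {k}" "reduced_word (q @ V m)" "y = word_eval G g (q @ V m)"
        using elem[OF iI(2) Vm(1-3)] y(2) Vm(4) unfolding H_def by auto
      have "p @ V x = q @ V m"
        by (rule unique) (use p q Vx Vm in auto)
      then obtain u where u: "V m = u @ V x" "p = q @ u" using suffix_split mx[OF x] by blast
      have lu: "set (map snd u) \<subseteq> I - {i}" using p(1) u(2) by auto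
      have lu': "set (map snd u) \<subseteq> I" using lu by auto
      have eu: "word_eval G g u \<in> H i" unfolding H_def by (rule eval_in_generate[OF _ lu]) auto
      have "b = word_eval G g u \<otimes> word_eval G g (V x)" unfolding b_def u(1)
        using eval_append[OF lu' Vx(2)] .
      then have "b \<in> H i #> word_eval G g (V x)" using eu unfolding r_coset_def by auto
      moreover have "subgroup (H i) G" unfolding H_def by (rule Hsub) auto
      ultimately have "H i #> word_eval G g (V x) = H i #> b"
        using repr_independence eval_carrier[OF Vx(2)] by blast
      then show ?thesis using Vx(4) i_def by simp
    qed
    have "Fl = (\<lambda>i. (i, H i #> b)) ` flag_type Fl"
    proof
      show "Fl \<subseteq> (\<lambda>i. (i, H i #> b)) ` flag_type Fl"
      proof
        fix x assume x: "x \<in> Fl"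
        then have "x = (fst x, H (fst x) #> b)" using key[OF x] by (metis prod.collapse)
        then show "x \<in> (\<lambda>i. (i, H i #> b)) ` flag_type Fl" using x unfolding flag_type_def by blast
      qed
    next
      show "(\<lambda>i. (i, H i #> b)) ` flag_type Fl \<subseteq> Fl"
      proof
        fix z assume "z \<in> (\<lambda>i. (i, H i #> b)) ` flag_type Fl"
        then obtain x where x: "x \<in> Fl" "z = (fst x, H (fst x) #> b)" unfolding flag_type_def by blast
        then have "z = x" using key[OF x(1)] by (metis prod.collapse)
        then show "z \<in> Fl" using x by simp
      qed
    qed
    then show ?thesis using bG unfolding H_def by blast
  qed
qed

lemma flag_trans:
  assumes fin: "finite I"
  shows "flag_transitive (G\<lparr>carrier := generate G (g ` I)\<rparr>) (\<lambda>i. generate G (g ` (I - {i}))) I"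
  unfolding flag_transitive_def
proof (intro allI impI)
  fix J F1 F2
  assume A: "coset_flag (G\<lparr>carrier := generate G (g ` I)\<rparr>) (\<lambda>i. generate G (g ` (I - {i}))) I F1 \<and>
           flag_type F1 = J \<and>
           coset_flag (G\<lparr>carrier := generate G (g ` I)\<rparr>) (\<lambda>i. generate G (g ` (I - {i}))) I F2 \<and>
           flag_type F2 = J"
  obtain b1 where b1: "b1 \<in> generate G (g ` I)" "F1 = (\<lambda>i. (i, generate G (g ` (I - {i})) #> b1)) ` J"
    using flag_common[OF fin, of F1] A by auto
  obtain b2 where b2: "b2 \<in> generate G (g ` I)" "F2 = (\<lambda>i. (i, generate G (g ` (I - {i})) #> b2)) ` J"
    using flag_common[OF fin, of F2] A by auto
  have SI: "subgroup (generate G (g ` I)) G" by (rule Hsub) auto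
  define a where "a = inv b1 \<otimes> b2"
  have aG: "a \<in> generate G (g ` I)" unfolding a_def
    using SI b1 b2 subgroup.m_closed subgroup.m_inv_closed by metis
  have c1: "b1 \<in> carrier G" "b2 \<in> carrier G" using b1 b2 subgroup.subset[OF SI] by auto
  have ra: "right_act (G\<lparr>carrier := generate G (g ` I)\<rparr>) a (i, generate G (g ` (I - {i})) #> b1)
     = (i, generate G (g ` (I - {i})) #> b2)" for i
  proof -
    have SS: "generate G (g ` (I - {i})) \<subseteq> carrier G" using subgroup.subset[OF Hsub[of "I - {i}"]] by auto
    have "(generate G (g ` (I - {i})) #> b1) #> a = generate G (g ` (I - {i})) #> (b1 \<otimes> a)"
      using coset_mult_assoc[OF SS c1(1)] aG subgroup.subset[OF SI] by auto
    also have "b1 \<otimes> a = b2" unfolding a_def using c1 by (simp add: m_assoc[symmetric])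
    finally show ?thesis unfolding right_act_def rcos_upd by simp
  qed
  have "right_act (G\<lparr>carrier := generate G (g ` I)\<rparr>) a ` F1 = F2"
    unfolding b1(2) b2(2) image_image ra by simp
  moreover have "a \<in> carrier (G\<lparr>carrier := generate G (g ` I)\<rparr>)" using aG by simp
  ultimately show "\<exists>a\<in>carrier (G\<lparr>carrier := generate G (g ` I)\<rparr>). right_act (G\<lparr>carrier := generate G (g ` I)\<rparr>) a ` F1 = F2"
    by blast
qed

end

theorem mainTheorem7:
  fixes F :: "('a,'b) monoid_scheme" and n :: nat and I :: "'i set" and g :: "'i \<Rightarrow> 'a"
  assumes "free_group_of_rank F n"
    and "finite I"
    and "g ` I \<subseteq> carrier F"
    and "inj_on g I"
    and "independent_family F g I"
  shows "flag_transitive (F\<lparr>carrier := generate F (g ` I)\<rparr>)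
           (\<lambda>i. generate F (g ` (I - {i}))) I"
proof -
  have grp: "group F" using assms(1) unfolding free_group_of_rank_def by blast
  have loc: "fwords_ind F g I"
    by (simp add: fwords_ind_def fwords_def fwords_axioms_def fwords_ind_axioms_def grp assms)
  show ?thesis by (rule fwords_ind.flag_trans[OF loc assms(2)])
qed

end
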